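(* Let $x,y>0$ and let $X=(x,y,x,y,\ldots)$ be the 2-periodic sequence. Then for all sufficiently large $k\in\mathbb{N}$, \[ S(X,2k,k)^{1/k}\ge S(X,2k+2,k+1)^{1/(k+1)}, \] and moreover \[ \lim_{k\to\infty}S(X,2k,k)^{1/k}=\left(\frac{x^{1/2}+y^{1/2}}{2}\right)^2. \]
   Context: For a sequence $X=(x_1,x_2,\ldots)$ of positive reals and integers $1\le k\le n$, $S(X,n,k):=\binom{n}{k}^{-1}\sum_{1\le i_1<\cdots<i_k\le n}x_{i_1}\cdots x_{i_k}$. *)

theory Defs
  imports "HOL-Analysis.Analysis"
begin

definition S :: "(nat \<Rightarrow> real) \<Rightarrow> nat \<Rightarrow> nat \<Rightarrow> real" where
  "S X n k = (\<Sum>I\<in>{I. I \<subseteq> {1..n} \<and> card I = k}. \<Prod>i\<in>I. X i) / real (n choose k)"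

definition per2 :: "real \<Rightarrow> real \<Rightarrow> nat \<Rightarrow> real" where
  "per2 x y i = (if odd i then x else y)"

end

theory Submission
  imports Defs "HOL-Computational_Algebra.Polynomial" "HOL-Real_Asymp.Real_Asymp"
begin

lemma prod_monom1:
  assumes "finite X"
  shows "(\<Prod>i\<in>X. monom (f i) 1) = monom (\<Prod>i\<in>X. f i :: 'a::comm_semiring_1) (card X)"
  using assms
proof (induction X rule: finite_induct)
  case empty thus ?case by simp
next
  case (insert a X) thus ?case by (simp add: mult_monom)
qed

lemma coeff_prod_lin:
  assumes "finite A"
  shows "coeff (\<Prod>i\<in>A. [:1, f i:]) k = (\<Sum>I\<in>{I. I \<subseteq> A \<and> card I = k}. \<Prod>i\<in>I. f i :: 'a::comm_semiring_1)"
proof -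
  have "(\<Prod>i\<in>A. [:1, f i:]) = (\<Prod>i\<in>A. monom (f i) 1 + 1)"
    by (intro prod.cong refl) (simp add: monom_Suc monom_0 one_pCons)
  also have "\<dots> = (\<Sum>X\<in>Pow A. monom (\<Prod>i\<in>X. f i) (card X))"
    using assms by (subst prod_add) (auto intro!: sum.cong simp: prod_monom1[simplified] finite_subset)
  finally have "coeff (\<Prod>i\<in>A. [:1, f i:]) k = (\<Sum>X\<in>Pow A. if card X = k then (\<Prod>i\<in>X. f i) else 0)"
    by (simp add: coeff_sum eq_commute)
  also have "\<dots> = (\<Sum>X\<in>{X\<in>Pow A. card X = k}. \<Prod>i\<in>X. f i)"
    by (rule sum.inter_filter[symmetric]) (use assms in simp)
  also have "{X\<in>Pow A. card X = k} = {I. I \<subseteq> A \<and> card I = k}" by auto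
  finally show ?thesis .
qed

lemma coeff_lin_power: "coeff ([:1, c:] ^ n) j = of_nat (n choose j) * (c::'a::comm_semiring_1) ^ j"
proof (induction n arbitrary: j)
  case 0 thus ?case by (cases j) auto
next
  case (Suc n)
  show ?case
  proof (cases j)
    case 0 thus ?thesis by (simp add: coeff_0_power)
  next
    case (Suc i)
    have "[:1, c:] ^ Suc n = [:1, c:] ^ n + pCons 0 (smult c ([:1, c:] ^ n))"
      by simp
    thus ?thesis using Suc.IH \<open>j = Suc i\<close> by (simp add: algebra_simps)
  qed
qed

lemma per2_prod:
  "(\<Prod>i\<in>{1..2*k}. [:1, per2 x y i:]) = ([:1, x:] * [:1, y:]) ^ k"
proof (induction k)
  case 0 thus ?case by simp
next
  case (Suc k)
  have "{1..2 * Suc k} = insert (Suc (Suc (2*k))) (insert (Suc (2*k)) {1..2*k})" by auto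
  hence "(\<Prod>i\<in>{1..2*Suc k}. [:1, per2 x y i:]) = (\<Prod>i\<in>{1..2*k}. [:1, per2 x y i:]) * [:1, x:] * [:1, y:]"
    by (simp add: per2_def)
  thus ?case using Suc by (simp only: power_Suc mult_ac)
qed

lemma S_per2_coeff:
  "S (per2 x y) (2*k) k = coeff (([:1, x:] * [:1, y:]) ^ k) k / real (2*k choose k)"
  unfolding S_def per2_prod[symmetric] by (simp only: coeff_prod_lin[OF finite_atLeastAtMost])

lemma coeff_gB:
  fixes x y g B :: real
  assumes "g * g = x * y" "B = x + y - 2 * g"
  shows "coeff (([:1, x:] * [:1, y:]) ^ k) k =
     (\<Sum>m\<le>k. real (k choose m) * B ^ m * (real (2*(k-m) choose (k-m)) * g ^ (k-m)))"
proof -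
  have "[:1, x:] * [:1, y:] = monom B 1 + [:1, g:] ^ 2"
    using assms by (simp add: power2_eq_square monom_Suc monom_0 algebra_simps)
  hence "([:1, x:] * [:1, y:]) ^ k = (\<Sum>m\<le>k. of_nat (k choose m) * monom B 1 ^ m * ([:1, g:] ^ 2) ^ (k - m))"
    by (simp add: binomial_ring)
  hence "coeff (([:1, x:] * [:1, y:]) ^ k) k =
     (\<Sum>m\<le>k. real (k choose m) * coeff (monom (B ^ m) m * [:1, g:] ^ (2 * (k - m))) k)"
    by (simp add: coeff_sum monom_power of_nat_poly power_mult mult.assoc)
  also have "\<dots> = (\<Sum>m\<le>k. real (k choose m) * B ^ m * (real (2*(k-m) choose (k-m)) * g ^ (k-m)))"
    by (intro sum.cong refl) (simp add: coeff_monom_mult coeff_lin_power)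
  finally show ?thesis .
qed

definition e :: "nat \<Rightarrow> real" where "e n = real (2*n choose n)"
definition rho :: "nat \<Rightarrow> real" where "rho n = 2 * (2 * real n + 1) / (real n + 1)"
lemma cb_Suc_nat: "Suc n * (2 * Suc n choose Suc n) = 2 * (2 * n + 1) * (2 * n choose n)"
proof -
  have h1: "Suc n * (Suc (Suc (2*n)) choose Suc n) = Suc (Suc (2*n)) * (Suc (2*n) choose n)"
    by (rule Suc_times_binomial)
  have h2: "(Suc (2*n) - n) * (Suc (2*n) choose n) = Suc (2*n) * (2*n choose n)"
    using binomial_absorb_comp[of "Suc (2*n)" n] by simp
  have h3: "Suc (2*n) - n = Suc n" by simp
  have "Suc n * (Suc n * (2 * Suc n choose Suc n)) = Suc n * (2 * (2 * n + 1) * (2 * n choose n))"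
  proof -
    have "Suc n * (Suc n * (2 * Suc n choose Suc n)) = Suc n * (Suc (Suc (2*n)) * (Suc (2*n) choose n))"
      using h1 by (simp del: binomial_Suc_Suc)
    also have "\<dots> = Suc (Suc (2*n)) * (Suc n * (Suc (2*n) choose n))" by (simp only: mult_ac)
    also have "\<dots> = Suc (Suc (2*n)) * (Suc (2*n) * (2*n choose n))" using h2 h3 by (simp del: binomial_Suc_Suc)
    also have "\<dots> = Suc n * (2 * (2 * n + 1) * (2 * n choose n))" by (simp del: binomial_Suc_Suc)
    finally show ?thesis .
  qed
  thus ?thesis by (rule mult_left_cancel[of "Suc n", THEN iffD1, rotated]) simp
qed

lemma e_Suc: "e (Suc n) = e n * rho n"
proof -
  have "real (Suc n) * e (Suc n) = 2 * (2 * real n + 1) * e n"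
    unfolding e_def using arg_cong[OF cb_Suc_nat[of n], of real] by (simp del: binomial_Suc_Suc add: algebra_simps)
  thus ?thesis unfolding rho_def by (simp add: field_simps)
qed

lemma e_pos: "e n > 0" unfolding e_def by simp
lemma rho_ineq: "4 * (2 * real k + 1) \<le> rho k * (2 * real k + 3)"
proof -
  have "rho k * (2 * real k + 3) = (2 * (2 * real k + 1) * (2 * real k + 3)) / (real k + 1)"
    unfolding rho_def by simp
  also have "4 * (2 * real k + 1) \<le> \<dots>"
    by (subst pos_le_divide_eq) (simp, simp add: algebra_simps)
  finally show ?thesis .
qed
lemma e_lower: "4 ^ k \<le> e k * (2 * real k + 1)"
proof (induction k)
  case 0 thus ?case by (simp add: e_def)
next
  case (Suc k)
  have "4 ^ Suc k = 4 * 4 ^ k" by simp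
  also have "\<dots> \<le> 4 * (e k * (2 * real k + 1))" using Suc by simp
  also have "\<dots> = e k * (4 * (2 * real k + 1))" by simp
  also have "\<dots> \<le> e k * (rho k * (2 * real k + 3))"
    by (rule mult_left_mono[OF rho_ineq]) (use e_pos[of k] in simp)
  also have "\<dots> = e (Suc k) * (2 * real (Suc k) + 1)"
    by (simp add: e_Suc)
  finally show ?case .
qed

lemma rho_alt: "rho n = 4 - 2 / (real n + 1)"
proof -
  have "real n + 1 > 0" by simp
  thus ?thesis unfolding rho_def by (simp add: divide_simps)
qed
lemma rho_le4: "rho n \<le> 4" unfolding rho_alt by simp
lemma rho_ge2: "rho n \<ge> 2"
proof -
  have "2 / (real n + 1) \<le> 2 / 1" by (rule divide_left_mono) auto
  thus ?thesis unfolding rho_alt by simp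
qed
lemma rho_pos: "rho n > 0" using rho_ge2[of n] by simp
lemma rho_mono: "a \<le> b \<Longrightarrow> rho a \<le> rho b"
proof -
  assume "a \<le> b"
  hence "2 / (real b + 1) \<le> 2 / (real a + 1)" by (intro divide_left_mono) auto
  thus ?thesis unfolding rho_alt by simp
qed

lemma e_le: "e (a + d) \<le> 4 ^ d * e a"
proof (induction d)
  case 0 thus ?case by simp
next
  case (Suc d)
  have "e (a + Suc d) = e (a + d) * rho (a + d)" by (simp add: e_Suc)
  also have "\<dots> \<le> e (a + d) * 4" by (intro mult_left_mono rho_le4 less_imp_le[OF e_pos])
  also have "\<dots> \<le> (4 ^ d * e a) * 4" by (rule mult_right_mono[OF Suc.IH]) simp
  also have "\<dots> = 4 ^ Suc d * e a" by (simp add: mult_ac)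
  finally show ?case .
qed

lemma e_step_lb:
  assumes "a + d \<le> k"
  shows "e (a + d) * (1 + 1 / (2 * real k)) ^ d \<le> 4 ^ d * e a"
  using assms
proof (induction d)
  case 0 thus ?case by simp
next
  case (Suc d)
  have k: "2 * real (a + d) + 1 \<le> 2 * real k" using Suc.prems by simp
  have "e (a + Suc d) * (1 + 1 / (2 * real k)) ^ Suc d
       = e (a + d) * (1 + 1 / (2 * real k)) ^ d * (rho (a + d) * (1 + 1 / (2 * real k)))"
    by (simp add: e_Suc)
  also have "rho (a + d) * (1 + 1 / (2 * real k)) \<le> 4"
  proof -
    have "k > 0" using Suc.prems by simp
    hence "rho (a + d) * (1 + 1 / (2 * real k)) = (2 * (2 * real (a+d) + 1) * (2 * real k + 1)) / ((real (a+d) + 1) * (2 * real k))"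
      by (simp add: rho_def field_simps)
    also have "\<dots> \<le> 4" 
    proof -
      have pos: "(real (a+d) + 1) * (2 * real k) > 0" using \<open>k > 0\<close> by simp
      show ?thesis unfolding pos_divide_le_eq[OF pos] using k by (simp add: algebra_simps)
    qed
    finally show ?thesis .
  qed
  hence "e (a + d) * (1 + 1 / (2 * real k)) ^ d * (rho (a + d) * (1 + 1 / (2 * real k)))
        \<le> e (a + d) * (1 + 1 / (2 * real k)) ^ d * 4"
    by (rule mult_left_mono) (use e_pos[of "a+d"] in simp_all)
  also have "\<dots> \<le> 4 ^ Suc d * e a"
  proof -
    have h: "e (a + d) * (1 + 1 / (2 * real k)) ^ d \<le> 4 ^ d * e a"
      using Suc.prems by (intro Suc.IH) simp
    show ?thesis using mult_right_mono[OF h, of 4] by (simp add: mult_ac)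
  qed
  finally show ?case .
qed

definition w :: "nat \<Rightarrow> nat \<Rightarrow> real" where "w k m = 4 ^ m * e (k - m) / e k"
definition F :: "real \<Rightarrow> nat \<Rightarrow> real" where
  "F r k = (\<Sum>m\<le>k. real (k choose m) * ((1 - r) ^ (k - m) * r ^ m * w k m))"

lemma w_ge: assumes "m \<le> k" shows "(1 + 1 / (2 * real k)) ^ m \<le> w k m"
proof -
  have "e ((k - m) + m) * (1 + 1 / (2 * real k)) ^ m \<le> 4 ^ m * e (k - m)"
    by (rule e_step_lb) (use assms in simp)
  hence "e k * (1 + 1 / (2 * real k)) ^ m \<le> 4 ^ m * e (k - m)" using assms by simp
  thus ?thesis unfolding w_def using e_pos[of k] by (simp add: field_simps)
qed

lemma w_le: assumes "m \<le> k" shows "w k m \<le> 2 * real k + 1"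
proof -
  have "e (0 + (k - m)) \<le> 4 ^ (k - m) * e 0" by (rule e_le)
  hence "e (k - m) \<le> 4 ^ (k - m)" by (simp add: e_def)
  hence "4 ^ m * e (k - m) \<le> 4 ^ m * 4 ^ (k - m)" by simp
  also have "\<dots> = 4 ^ k" using assms by (simp add: power_add[symmetric])
  also have "\<dots> \<le> e k * (2 * real k + 1)" by (rule e_lower)
  finally show ?thesis unfolding w_def using e_pos[of k] by (simp add: field_simps)
qed

lemma w_pos: "w k m > 0" unfolding w_def using e_pos by simp

lemma w_mono: assumes "m \<le> m'" "m' \<le> k" shows "w k m \<le> w k m'"
proof -
  have "e ((k - m') + (m' - m)) \<le> 4 ^ (m' - m) * e (k - m')" by (rule e_le)
  hence "e (k - m) \<le> 4 ^ (m' - m) * e (k - m')" using assms by simp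
  hence "4 ^ m * e (k - m) \<le> 4 ^ m * (4 ^ (m' - m) * e (k - m'))" by simp
  also have "\<dots> = 4 ^ m' * e (k - m')" using assms by (simp add: power_add[symmetric] mult.assoc[symmetric])
  finally show ?thesis unfolding w_def using e_pos[of k] by (simp add: divide_right_mono)
qed

lemma w_Suc1: assumes "m \<le> k" shows "w (Suc k) m = w k m * rho (k - m) / rho k"
proof -
  have "Suc k - m = Suc (k - m)" using assms by simp
  thus ?thesis unfolding w_def using e_pos[of k] rho_pos[of k] by (simp add: e_Suc field_simps)
qed

lemma w_Suc2: shows "w (Suc k) (Suc m) = w k m * 4 / rho k"
  unfolding w_def using e_pos[of k] rho_pos[of k] by (simp add: e_Suc field_simps)

lemma bsum1: "(\<Sum>m\<le>k. real (k choose m) * ((1 - r) ^ (k - m) * r ^ m)) = 1"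
proof -
  have "(r + (1 - r)) ^ k = (\<Sum>m\<le>k. real (k choose m) * r ^ m * (1 - r) ^ (k - m))"
    by (rule binomial_ring)
  thus ?thesis by (simp add: mult_ac)
qed

lemma F_ge_pow: assumes "0 \<le> r" "r \<le> 1" shows "(1 + r / (2 * real k)) ^ k \<le> F r k"
proof -
  have "(1 + r / (2 * real k)) ^ k = (r * (1 + 1 / (2 * real k)) + (1 - r)) ^ k"
    by (simp add: algebra_simps)
  also have "\<dots> = (\<Sum>m\<le>k. real (k choose m) * (r * (1 + 1 / (2 * real k))) ^ m * (1 - r) ^ (k - m))"
    by (rule binomial_ring)
  also have "\<dots> \<le> F r k" unfolding F_def
  proof (rule sum_mono)
    fix m assume "m \<in> {..k}"
    hence "(1 + 1 / (2 * real k)) ^ m \<le> w k m" by (intro w_ge) simp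
    hence "real (k choose m) * ((1 - r) ^ (k - m) * r ^ m) * (1 + 1 / (2 * real k)) ^ m
       \<le> real (k choose m) * ((1 - r) ^ (k - m) * r ^ m) * w k m"
      by (rule mult_left_mono) (use assms in simp)
    thus "real (k choose m) * (r * (1 + 1 / (2 * real k))) ^ m * (1 - r) ^ (k - m)
       \<le> real (k choose m) * ((1 - r) ^ (k - m) * r ^ m * w k m)"
      by (simp add: power_mult_distrib mult_ac)
  qed
  finally show ?thesis .
qed

lemma F_ge1: assumes "0 \<le> r" "r \<le> 1" shows "1 \<le> F r k"
proof -
  have "1 \<le> (1 + r / (2 * real k)) ^ k" using assms by (intro one_le_power) simp
  thus ?thesis using F_ge_pow[OF assms, of k] by linarith
qed

lemma F_ge: assumes "0 \<le> r" "r \<le> 1" "k \<ge> 1" shows "1 + r / 2 \<le> F r k"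
proof -
  have "1 + real k * (r / (2 * real k)) \<le> (1 + r / (2 * real k)) ^ k"
    proof (rule Bernoulli_inequality)
    have "0 \<le> r / (2 * real k)" using assms by simp
    thus "-1 \<le> r / (2 * real k)" by linarith
  qed
  moreover have "real k * (r / (2 * real k)) = r / 2" using assms by simp
  ultimately show ?thesis using F_ge_pow[OF assms(1,2), of k] by linarith
qed

lemma F_le: assumes "0 \<le> r" "r \<le> 1" shows "F r k \<le> 2 * real k + 1"
proof -
  have "F r k \<le> (\<Sum>m\<le>k. real (k choose m) * ((1 - r) ^ (k - m) * r ^ m) * (2 * real k + 1))"
    unfolding F_def
  proof (rule sum_mono)
    fix m assume "m \<in> {..k}"
    hence "w k m \<le> 2 * real k + 1" by (intro w_le) simp
    hence "real (k choose m) * ((1 - r) ^ (k - m) * r ^ m) * w k m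
       \<le> real (k choose m) * ((1 - r) ^ (k - m) * r ^ m) * (2 * real k + 1)"
      by (rule mult_left_mono) (use assms in simp)
    thus "real (k choose m) * ((1 - r) ^ (k - m) * r ^ m * w k m)
       \<le> real (k choose m) * ((1 - r) ^ (k - m) * r ^ m) * (2 * real k + 1)"
      by (simp add: mult_ac)
  qed
  also have "\<dots> = 2 * real k + 1" by (simp add: sum_distrib_right[symmetric] bsum1)
  finally show ?thesis .
qed

lemma cheb_w:
  fixes p a b :: "nat \<Rightarrow> real"
  assumes p: "\<And>i. i \<le> k \<Longrightarrow> 0 \<le> p i" and ps: "(\<Sum>i\<le>k. p i) = 1"
    and ord: "\<And>i j. i \<le> j \<Longrightarrow> j \<le> k \<Longrightarrow> a i \<le> a j \<and> b j \<le> b i"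
  shows "(\<Sum>i\<le>k. p i * a i * b i) \<le> (\<Sum>i\<le>k. p i * a i) * (\<Sum>i\<le>k. p i * b i)"
proof -
  let ?S = "(\<Sum>i\<le>k. \<Sum>j\<le>k. p i * p j * ((a i - a j) * (b i - b j)))"
  have e1: "(\<Sum>i\<le>k. \<Sum>j\<le>k. p i * p j * (a i * b i)) = (\<Sum>i\<le>k. p i * a i * b i) * (\<Sum>i\<le>k. p i)"
    unfolding sum_product by (intro sum.cong refl) (simp add: mult_ac)
  have e2: "(\<Sum>i\<le>k. \<Sum>j\<le>k. p i * p j * (a j * b j)) = (\<Sum>i\<le>k. p i) * (\<Sum>i\<le>k. p i * a i * b i)"
    unfolding sum_product by (intro sum.cong refl) (simp add: mult_ac)
  have e3: "(\<Sum>i\<le>k. \<Sum>j\<le>k. p i * p j * (a i * b j)) = (\<Sum>i\<le>k. p i * a i) * (\<Sum>i\<le>k. p i * b i)"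
    unfolding sum_product by (intro sum.cong refl) (simp add: mult_ac)
  have e4: "(\<Sum>i\<le>k. \<Sum>j\<le>k. p i * p j * (a j * b i)) = (\<Sum>i\<le>k. p i * b i) * (\<Sum>i\<le>k. p i * a i)"
    unfolding sum_product by (intro sum.cong refl) (simp add: mult_ac)
  have "?S = (\<Sum>i\<le>k. \<Sum>j\<le>k. p i * p j * (a i * b i)) + (\<Sum>i\<le>k. \<Sum>j\<le>k. p i * p j * (a j * b j))
     - (\<Sum>i\<le>k. \<Sum>j\<le>k. p i * p j * (a i * b j)) - (\<Sum>i\<le>k. \<Sum>j\<le>k. p i * p j * (a j * b i))"
    by (simp add: sum.distrib sum_subtractf algebra_simps)
  also have "\<dots> = 2 * ((\<Sum>i\<le>k. p i) * (\<Sum>i\<le>k. p i * a i * b i)) - 2 * ((\<Sum>i\<le>k. p i * a i) * (\<Sum>i\<le>k. p i * b i))"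
    unfolding e1 e2 e3 e4 by (simp add: algebra_simps)
  finally have "?S = 2 * ((\<Sum>i\<le>k. p i) * (\<Sum>i\<le>k. p i * a i * b i)) - 2 * ((\<Sum>i\<le>k. p i * a i) * (\<Sum>i\<le>k. p i * b i))" .
  moreover have "?S \<le> 0"
  proof (rule sum_nonpos, rule sum_nonpos)
    fix i j assume i: "i \<in> {..k}" and j: "j \<in> {..k}"
    have "(a i - a j) * (b i - b j) \<le> 0"
    proof (cases "i \<le> j")
      case True thus ?thesis using ord[of i j] j by (auto simp: mult_le_0_iff)
    next
      case False thus ?thesis using ord[of j i] i by (auto simp: mult_le_0_iff)
    qed
    moreover have "0 \<le> p i * p j" using p i j by simp
    ultimately show "p i * p j * ((a i - a j) * (b i - b j)) \<le> 0" by (metis mult_nonneg_nonpos)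
  qed
  ultimately show ?thesis using ps by simp
qed

lemma sum_pascal:
  fixes f :: "nat \<Rightarrow> real"
  shows "(\<Sum>m\<le>Suc k. real (Suc k choose m) * f m)
     = (\<Sum>m\<le>k. real (k choose m) * f m) + (\<Sum>m\<le>k. real (k choose m) * f (Suc m))"
proof -
  have A: "(\<Sum>m\<le>Suc k. real (Suc k choose m) * f m)
      = f 0 + (\<Sum>m\<le>k. real (k choose m) * f (Suc m)) + (\<Sum>m\<le>k. real (k choose Suc m) * f (Suc m))"
    by (subst sum.atMost_Suc_shift) (simp add: algebra_simps sum.distrib)
  have "(\<Sum>m\<le>Suc k. real (k choose m) * f m) = f 0 + (\<Sum>m\<le>k. real (k choose Suc m) * f (Suc m))"
    by (subst sum.atMost_Suc_shift) simp
  moreover have "(\<Sum>m\<le>Suc k. real (k choose m) * f m) = (\<Sum>m\<le>k. real (k choose m) * f m)"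
    by (simp add: sum.atMost_Suc)
  ultimately show ?thesis using A by simp
qed

lemma key_id:
  "(\<Sum>m\<le>k. real (k choose m) * ((1 - r) ^ (k - m) * r ^ m) / (real (k - m) + 1)) * ((real k + 1) * (1 - r))
   = 1 - r ^ Suc k"
proof -
  have "(\<Sum>m\<le>k. real (k choose m) * ((1 - r) ^ (k - m) * r ^ m) / (real (k - m) + 1)) * ((real k + 1) * (1 - r))
      = (\<Sum>m\<le>k. real (Suc k choose m) * ((1 - r) ^ (Suc k - m) * r ^ m))"
    unfolding sum_distrib_right
  proof (rule sum.cong[OF refl])
    fix m assume "m \<in> {..k}"
    hence m: "m \<le> k" by simp
    have "(Suc k - m) * (Suc k choose m) = Suc k * (k choose m)"
      using binomial_absorb_comp[of "Suc k" m] by simp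
    moreover have sk: "Suc k - m = Suc (k - m)" using m by simp
    ultimately have "real ((k choose m) * Suc k) = real ((Suc k choose m) * Suc (k - m))"
      by (simp only: mult.commute)
    hence c: "real (k choose m) * (real k + 1) / (real (k - m) + 1) = real (Suc k choose m)"
      by (simp add: field_simps)
    have "real (k choose m) * ((1 - r) ^ (k - m) * r ^ m) / (real (k - m) + 1) * ((real k + 1) * (1 - r))
       = (real (k choose m) * (real k + 1) / (real (k - m) + 1)) * ((1 - r) ^ (k - m) * r ^ m * (1 - r))"
      by (simp add: field_simps)
    also have "\<dots> = real (Suc k choose m) * ((1 - r) ^ (Suc k - m) * r ^ m)"
      unfolding c sk by (simp add: mult_ac)
    finally show "real (k choose m) * ((1 - r) ^ (k - m) * r ^ m) / (real (k - m) + 1) * ((real k + 1) * (1 - r))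
      = real (Suc k choose m) * ((1 - r) ^ (Suc k - m) * r ^ m)" .
  qed
  also have "\<dots> = (\<Sum>m\<le>Suc k. real (Suc k choose m) * ((1 - r) ^ (Suc k - m) * r ^ m)) - r ^ Suc k"
    by (simp add: sum.atMost_Suc)
  also have "\<dots> = 1 - r ^ Suc k" by (simp only: bsum1)
  finally show ?thesis .
qed

lemma F_Suc:
  assumes r0: "0 \<le> r" and r1: "r < 1"
  shows "F r (Suc k) \<le> F r k * (1 + r ^ Suc k)"
proof -
  define p where "p m = real (k choose m) * ((1 - r) ^ (k - m) * r ^ m)" for m
  define \<phi> where "\<phi> m = ((1 - r) * rho (k - m) + 4 * r) / rho k" for m
  define f where "f m = (1 - r) ^ (Suc k - m) * r ^ m * w (Suc k) m" for m
  have rk: "rho k > 0" by (rule rho_pos)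
  have "F r (Suc k) = (\<Sum>m\<le>Suc k. real (Suc k choose m) * f m)"
    unfolding F_def f_def ..
  also have "\<dots> = (\<Sum>m\<le>k. real (k choose m) * f m + real (k choose m) * f (Suc m))"
    by (simp only: sum_pascal sum.distrib)
  also have "\<dots> = (\<Sum>m\<le>k. p m * w k m * \<phi> m)"
  proof (rule sum.cong[OF refl])
    fix m assume "m \<in> {..k}"
    hence m: "m \<le> k" by simp
    have s1: "Suc k - m = Suc (k - m)" using m by simp
    have fm: "f m = (1 - r) ^ (k - m) * r ^ m * w k m * ((1 - r) * rho (k - m) / rho k)"
      unfolding f_def s1 w_Suc1[OF m] using rk by (simp add: field_simps)
    moreover have fS: "f (Suc m) = (1 - r) ^ (k - m) * r ^ m * w k m * (4 * r / rho k)"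
      unfolding f_def w_Suc2 using rk by (simp add: field_simps)
    ultimately show "real (k choose m) * f m + real (k choose m) * f (Suc m) = p m * w k m * \<phi> m"
      unfolding fm fS p_def \<phi>_def using rk by (simp add: field_simps)
  qed
  also have "\<dots> \<le> (\<Sum>m\<le>k. p m * w k m) * (\<Sum>m\<le>k. p m * \<phi> m)"
  proof (rule cheb_w)
    show "0 \<le> p i" for i unfolding p_def using r0 r1 by simp
    show "(\<Sum>i\<le>k. p i) = 1" unfolding p_def by (rule bsum1)
    fix i j assume ij: "i \<le> j" "j \<le> k"
    show "w k i \<le> w k j \<and> \<phi> j \<le> \<phi> i"
    proof
      show "w k i \<le> w k j" by (rule w_mono[OF ij])
      have "rho (k - j) \<le> rho (k - i)" using ij by (intro rho_mono) simp
      hence "(1 - r) * rho (k - j) \<le> (1 - r) * rho (k - i)" using r1 by (intro mult_left_mono) simp_all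
      thus "\<phi> j \<le> \<phi> i" unfolding \<phi>_def using rk by (intro divide_right_mono) simp_all
    qed
  qed
  also have "(\<Sum>m\<le>k. p m * w k m) = F r k" unfolding F_def p_def by (simp add: mult_ac)
  also have "(\<Sum>m\<le>k. p m * \<phi> m) \<le> 1 + r ^ Suc k"
  proof -
    define Q where "Q = (\<Sum>m\<le>k. p m / (real (k - m) + 1))"
    have Qid: "Q * ((real k + 1) * (1 - r)) = 1 - r ^ Suc k"
      unfolding Q_def p_def by (rule key_id)
    have "(\<Sum>m\<le>k. p m * ((1 - r) * rho (k - m) + 4 * r)) = (\<Sum>m\<le>k. 4 * p m - 2 * (1 - r) * (p m / (real (k - m) + 1)))"
      by (intro sum.cong refl) (simp add: rho_alt algebra_simps)
    also have "\<dots> = 4 * (\<Sum>m\<le>k. p m) - 2 * (1 - r) * Q"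
      unfolding Q_def by (simp add: sum_subtractf sum_distrib_left)
    also have "(\<Sum>m\<le>k. p m) = 1" unfolding p_def by (rule bsum1)
    finally have num: "(\<Sum>m\<le>k. p m * ((1 - r) * rho (k - m) + 4 * r)) = 4 - 2 * (1 - r) * Q" by simp
    have "(1 - r) * Q = (1 - r ^ Suc k) / (real k + 1)"
      using Qid by (simp add: field_simps)
    hence "4 - 2 * (1 - r) * Q = 4 - 2 * ((1 - r ^ Suc k) / (real k + 1))"
      by (metis mult.assoc)
    also have "\<dots> = (4 - 2 / (real k + 1)) + 2 * r ^ Suc k / (real k + 1)"
      by (simp add: diff_divide_distrib)
    finally have num2: "4 - 2 * (1 - r) * Q = rho k + 2 * r ^ Suc k / (real k + 1)"
      by (simp add: rho_alt)
    have "(\<Sum>m\<le>k. p m * \<phi> m) = (\<Sum>m\<le>k. p m * ((1 - r) * rho (k - m) + 4 * r)) / rho k"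
      unfolding \<phi>_def by (simp add: sum_divide_distrib)
    also have "\<dots> = 1 + (2 * r ^ Suc k / (real k + 1)) / rho k"
      unfolding num num2 using rk by (simp add: add_divide_distrib)
    also have "(2 * r ^ Suc k / (real k + 1)) / rho k \<le> r ^ Suc k"
    proof -
      have "(2 * r ^ Suc k / (real k + 1)) / rho k = r ^ Suc k * (2 / ((real k + 1) * rho k))"
        by (simp add: field_simps)
      also have "\<dots> \<le> r ^ Suc k * 1"
      proof (rule mult_left_mono)
        have "2 \<le> (real k + 1) * rho k"
          using rho_ge2[of k] mult_mono[of 1 "real k + 1" 2 "rho k"] by simp
        thus "2 / ((real k + 1) * rho k) \<le> 1" by simp
      qed (use r0 in simp)
      finally show ?thesis by simp
    qed
    finally show ?thesis by simp
  qed
  hence "F r k * (\<Sum>m\<le>k. p m * \<phi> m) \<le> F r k * (1 + r ^ Suc k)"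
    using F_ge1[of r k] r0 r1 by (intro mult_left_mono) simp_all
  finally show ?thesis .
qed

lemma S_eq:
  fixes x y :: real
  assumes "x > 0" "y > 0"
  defines "g \<equiv> sqrt x * sqrt y" and "B \<equiv> x + y - 2 * (sqrt x * sqrt y)"
  defines "L \<equiv> g + B / 4"
  defines "r \<equiv> B / (4 * L)"
  shows "S (per2 x y) (2*k) k = L ^ k * F r k"
proof -
  have gg: "g * g = x * y" unfolding g_def using assms by (simp add: real_sqrt_mult[symmetric])
  have Lpos: "L > 0" unfolding L_def B_def g_def using assms
    by (simp add: field_simps) (smt (verit) real_sqrt_gt_zero mult_pos_pos)
  have rL: "r * L = B / 4" unfolding r_def using Lpos by simp
  have rL1: "(1 - r) * L = g" using rL unfolding L_def by (simp add: algebra_simps)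
  have Beq: "B = x + y - 2 * g" unfolding B_def g_def ..
  have "S (per2 x y) (2*k) k = (\<Sum>m\<le>k. real (k choose m) * B ^ m * (e (k-m) * g ^ (k-m))) / e k"
    unfolding S_per2_coeff coeff_gB[OF gg Beq] e_def ..
  also have "\<dots> = (\<Sum>m\<le>k. real (k choose m) * ((1 - r) ^ (k - m) * r ^ m * w k m) * L ^ k)"
    unfolding sum_divide_distrib
  proof (rule sum.cong[OF refl])
    fix m assume "m \<in> {..k}"
    hence m: "m \<le> k" by simp
    have Lk: "L ^ k = L ^ (k - m) * L ^ m" using m by (simp add: power_add[symmetric])
    have "real (k choose m) * ((1 - r) ^ (k - m) * r ^ m * w k m) * L ^ k
        = real (k choose m) * (((1 - r) * L) ^ (k - m) * (r * L) ^ m * w k m)"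
      unfolding Lk by (simp add: power_mult_distrib mult_ac)
    also have "\<dots> = real (k choose m) * (g ^ (k - m) * (B / 4) ^ m * w k m)"
      unfolding rL rL1 ..
    also have "\<dots> = real (k choose m) * B ^ m * (e (k - m) * g ^ (k - m)) / e k"
      unfolding w_def using e_pos[of k] by (simp add: power_divide field_simps)
    finally show "real (k choose m) * B ^ m * (e (k - m) * g ^ (k - m)) / e k
        = real (k choose m) * ((1 - r) ^ (k - m) * r ^ m * w k m) * L ^ k" ..
  qed
  also have "\<dots> = L ^ k * F r k" unfolding F_def sum_distrib_left by (intro sum.cong refl) (simp add: mult_ac)
  finally show ?thesis .
qed

lemma F_powr_mono:
  assumes r0: "0 \<le> r" and r1: "r < 1" and k: "k \<ge> 1" and h: "(1 + r ^ Suc k) ^ k \<le> 1 + r / 2"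
  shows "F r (Suc k) powr (1 / real (Suc k)) \<le> F r k powr (1 / real k)"
proof -
  have F1: "1 \<le> F r k" and F2: "1 \<le> F r (Suc k)" using F_ge1 r0 r1 by auto
  have "F r (Suc k) ^ k \<le> (F r k * (1 + r ^ Suc k)) ^ k"
    by (rule power_mono[OF F_Suc[OF r0 r1]]) (use F2 in simp)
  also have "\<dots> = F r k ^ k * (1 + r ^ Suc k) ^ k" by (simp add: power_mult_distrib)
  also have "\<dots> \<le> F r k ^ k * (1 + r / 2)"
    by (rule mult_left_mono[OF h]) (use F1 in simp)
  also have "\<dots> \<le> F r k ^ k * F r k"
    by (rule mult_left_mono[OF F_ge[OF r0 _ k]]) (use F1 r1 in simp_all)
  also have "\<dots> = F r k ^ Suc k" by simp
  finally have main: "F r (Suc k) ^ k \<le> F r k ^ Suc k" .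
  define c where "c = 1 / (real k * real (Suc k))"
  have c0: "c \<ge> 0" unfolding c_def by simp
  have "F r (Suc k) powr (1 / real (Suc k)) = (F r (Suc k) powr real k) powr c"
    unfolding powr_powr c_def using k by simp
  also have "\<dots> = (F r (Suc k) ^ k) powr c" using F2 by (simp add: powr_realpow)
  also have "\<dots> \<le> (F r k ^ Suc k) powr c"
    by (rule powr_mono2[OF c0 _ main]) (use F2 in simp)
  also have "\<dots> = (F r k powr real (Suc k)) powr c" using F1 by (subst powr_realpow) auto
  also have "\<dots> = F r k powr (1 / real k)"
    unfolding powr_powr c_def using k by simp
  finally show ?thesis .
qed

theorem lemma4p1:
  fixes x y :: real
  assumes "x > 0" and "y > 0"
  shows "(\<forall>\<^sub>F k in sequentially.
            S (per2 x y) (2*k) k powr (1 / real k)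
              \<ge> S (per2 x y) (2*k+2) (k+1) powr (1 / real (k+1)))
         \<and> (\<lambda>k. S (per2 x y) (2*k) k powr (1 / real k))
              \<longlonglongrightarrow> ((sqrt x + sqrt y) / 2)^2"
proof -
  define g where "g = sqrt x * sqrt y"
  define B where "B = x + y - 2 * (sqrt x * sqrt y)"
  define L where "L = g + B / 4"
  define r where "r = B / (4 * L)"
  have Seq: "S (per2 x y) (2*k) k = L ^ k * F r k" for k
    unfolding L_def r_def B_def g_def by (rule S_eq[OF assms])
  have sx: "sqrt x * sqrt x = x" and sy: "sqrt y * sqrt y = y" using assms by simp_all
  have gpos: "g > 0" unfolding g_def using assms by simp
  have B0: "B \<ge> 0"
  proof -
    have "B = (sqrt x - sqrt y) ^ 2" unfolding B_def power2_eq_square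
      using assms by (simp add: algebra_simps sx sy)
    thus ?thesis by simp
  qed
  have Lpos: "L > 0" unfolding L_def using gpos B0 by simp
  have Leq: "L = ((sqrt x + sqrt y) / 2) ^ 2"
    unfolding L_def g_def B_def power2_eq_square using assms by (simp add: field_simps)
  have r0: "0 \<le> r" unfolding r_def using B0 Lpos by simp
  have r1: "r < 1" unfolding r_def using Lpos gpos by (simp add: L_def)
  have aeq: "S (per2 x y) (2*k) k powr (1 / real k) = L * F r k powr (1 / real k)" if k: "k \<ge> 1" for k
  proof -
    have "S (per2 x y) (2*k) k powr (1 / real k) = (L ^ k) powr (1 / real k) * F r k powr (1 / real k)"
      unfolding Seq by (rule powr_mult)
    also have "(L ^ k) powr (1 / real k) = L"
      using Lpos k by (simp add: powr_realpow[symmetric] powr_powr)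
    finally show ?thesis .
  qed
  have lim: "(\<lambda>k. S (per2 x y) (2*k) k powr (1 / real k)) \<longlonglongrightarrow> ((sqrt x + sqrt y) / 2)^2"
  proof -
    have up: "(\<lambda>k. (2 * real k + 1) powr (1 / real k)) \<longlonglongrightarrow> 1" by real_asymp
    have "(\<lambda>k. F r k powr (1 / real k)) \<longlonglongrightarrow> 1"
    proof (rule tendsto_sandwich[OF _ _ tendsto_const up])
      show "\<forall>\<^sub>F k in sequentially. 1 \<le> F r k powr (1 / real k)"
        using F_ge1[OF r0] r1 by (intro always_eventually allI ge_one_powr_ge_zero) auto
      show "\<forall>\<^sub>F k in sequentially. F r k powr (1 / real k) \<le> (2 * real k + 1) powr (1 / real k)"
        using F_ge1[OF r0] F_le[OF r0] r1
        by (intro always_eventually allI powr_mono2) (auto intro: order.trans[of 0 1])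
    qed
    hence "(\<lambda>k. L * F r k powr (1 / real k)) \<longlonglongrightarrow> L * 1" by (rule tendsto_mult_left)
    moreover have "\<forall>\<^sub>F k in sequentially. L * F r k powr (1 / real k) = S (per2 x y) (2*k) k powr (1 / real k)"
      using eventually_ge_at_top[of 1] by eventually_elim (simp add: aeq)
    ultimately show ?thesis unfolding Leq[symmetric] by (simp add: tendsto_cong)
  qed
  have ev1: "\<forall>\<^sub>F k in sequentially. (1 + r ^ Suc k) ^ k \<le> 1 + r / 2"
  proof (cases "r = 0")
    case True thus ?thesis by simp
  next
    case False
    hence rpos: "r > 0" using r0 by simp
    have "(\<lambda>k. real k * r ^ k) \<longlonglongrightarrow> 0"
      by (rule powser_times_n_limit_0) (use r0 r1 in simp)
    hence "(\<lambda>k. r * (real k * r ^ k)) \<longlonglongrightarrow> r * 0" by (rule tendsto_mult_left)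
    hence "(\<lambda>k. exp (r * (real k * r ^ k))) \<longlonglongrightarrow> exp (r * 0)" by (rule tendsto_exp)
    hence "\<forall>\<^sub>F k in sequentially. exp (r * (real k * r ^ k)) < 1 + r / 2"
      by (rule order_tendstoD(2)) (use rpos in simp)
    thus ?thesis
    proof eventually_elim
      case (elim k)
      have "(1 + r ^ Suc k) ^ k \<le> exp (r ^ Suc k) ^ k"
        by (rule power_mono[OF exp_ge_add_one_self]) (use r0 in simp)
      also have "\<dots> = exp (real k * r ^ Suc k)" by (rule exp_of_nat_mult[symmetric])
      also have "real k * r ^ Suc k = r * (real k * r ^ k)" by (simp add: mult_ac)
      finally show ?case using elim by simp
    qed
  qed
  have mono: "\<forall>\<^sub>F k in sequentially.
            S (per2 x y) (2*k) k powr (1 / real k)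
              \<ge> S (per2 x y) (2*k+2) (k+1) powr (1 / real (k+1))"
    using ev1 eventually_ge_at_top[of 1]
  proof eventually_elim
    case (elim k)
    have e2: "2*k+2 = 2 * Suc k" "k + 1 = Suc k" by simp_all
    have "S (per2 x y) (2*k+2) (k+1) powr (1 / real (k+1)) = L * F r (Suc k) powr (1 / real (Suc k))"
      unfolding e2 using aeq[of "Suc k"] by simp
    also have "\<dots> \<le> L * F r k powr (1 / real k)"
      using F_powr_mono[OF r0 r1 elim(2) elim(1)] Lpos by simp
    also have "\<dots> = S (per2 x y) (2*k) k powr (1 / real k)" using aeq[OF elim(2)] by simp
    finally show ?case .
  qed
  show ?thesis using mono lim by blast
qed

end
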